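(* Let $\Gamma''$ be a congruence subgroup of $\operatorname{Mp}_2(\mathbb{Z})$, let $f$ be a harmonic Maass form of weight $k$ and $g$ a harmonic Maass form of weight $l$ for $\Gamma''$. For every non-negative integer $j$, \[ (-4\pi)^jL[f,g]_j=\binom{l+j-1}{j}(R_k^jf)(Lg)+(-1)^j\binom{k+j-1}{j}(Lf)(R_l^jg). \]
   Context: $\tau=u+iv\in\mathbb{H}$. $R_k=2i\partial_\tau+kv^{-1}$, $L=L_k=-2iv^2\partial_{\bar\tau}$ (independent of $k$), $R_k^j=R_{k+2(j-1)}\circ\cdots\circ R_k$. The weight $k$ Laplacian is $\Delta_k=-v^2(\partial_u^2+\partial_v^2)+ikv(\partial_u+i\partial_v)$. A harmonic Maass form of weight $k$ for $\Gamma''$ is a smooth $f:\mathbb{H}\to\mathbb{C}$ invariant under the weight $k$ slash action of $\Gamma''$, with $\Delta_kf=0$ and at most exponential growth at the cusps. The $j$-th Rankin–Cohen bracket of $f$ (weight $k$) and $g$ (weight $l$) is $[f,g]_j=\sum_{s=0}^j(-1)^s\binom{k+j-1}{s}\binom{l+j-1}{j-s}f^{(j-s)}g^{(s)}$, where $f^{(s)}=(2\pi i)^{-s}\partial_\tau^sf$ and $\binom{x}{s}=x(x-1)\cdots(x-s+1)/s!$ for real $x$. *)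

theory Defs
  imports "HOL-Analysis.Analysis"
begin

definition uhp :: "complex set" where
  "uhp = {\<tau>. Im \<tau> > 0}"

type_synonym mat2 = "int \<times> int \<times> int \<times> int"

definition SL2Z :: "mat2 set" where
  "SL2Z = {(a,b,c,d). a*d - b*c = 1}"

fun mat_mult :: "mat2 \<Rightarrow> mat2 \<Rightarrow> mat2" where
  "mat_mult (a,b,c,d) (a',b',c',d') = (a*a'+b*c', a*b'+b*d', c*a'+d*c', c*b'+d*d')"

fun mat_inv :: "mat2 \<Rightarrow> mat2" where
  "mat_inv (a,b,c,d) = (d,-b,-c,a)"

fun moeb :: "mat2 \<Rightarrow> complex \<Rightarrow> complex" where
  "moeb (a,b,c,d) \<tau> = (of_int a * \<tau> + of_int b) / (of_int c * \<tau> + of_int d)"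

fun cd_lin :: "mat2 \<Rightarrow> complex \<Rightarrow> complex" where
  "cd_lin (a,b,c,d) \<tau> = of_int c * \<tau> + of_int d"

text \<open>Elements of the metaplectic group Mp2(Z): pairs (M, phi) with M in SL2(Z) and
  phi a holomorphic square root of c tau + d on the upper half-plane. To make the
  representation unique, phi is normalised to be 0 off the upper half-plane.\<close>

type_synonym mp = "mat2 \<times> (complex \<Rightarrow> complex)"

definition Mp2Z :: "mp set" where
  "Mp2Z = {(M,\<phi>). M \<in> SL2Z \<and> \<phi> holomorphic_on uhp
            \<and> (\<forall>\<tau>\<in>uhp. (\<phi> \<tau>)\<^sup>2 = cd_lin M \<tau>) \<and> (\<forall>\<tau>. \<tau> \<notin> uhp \<longrightarrow> \<phi> \<tau> = 0)}"

definition mp_one :: mp where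
  "mp_one = ((1,0,0,1), (\<lambda>\<tau>. if \<tau> \<in> uhp then 1 else 0))"

fun mp_mult :: "mp \<Rightarrow> mp \<Rightarrow> mp" where
  "mp_mult (M1,\<phi>1) (M2,\<phi>2) =
     (mat_mult M1 M2, (\<lambda>\<tau>. if \<tau> \<in> uhp then \<phi>1 (moeb M2 \<tau>) * \<phi>2 \<tau> else 0))"

fun mp_inv :: "mp \<Rightarrow> mp" where
  "mp_inv (M,\<phi>) = (mat_inv M, (\<lambda>\<tau>. if \<tau> \<in> uhp then 1 / \<phi> (moeb (mat_inv M) \<tau>) else 0))"

definition Gamma_princ :: "int \<Rightarrow> mat2 set" where
  "Gamma_princ N = {(a,b,c,d). (a,b,c,d) \<in> SL2Z \<and> a mod N = 1 mod N \<and> b mod N = 0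
                      \<and> c mod N = 0 \<and> d mod N = 1 mod N}"

definition congruence_subgroup_Mp2 :: "mp set \<Rightarrow> bool" where
  "congruence_subgroup_Mp2 G \<longleftrightarrow>
     G \<subseteq> Mp2Z \<and> mp_one \<in> G \<and> (\<forall>x\<in>G. \<forall>y\<in>G. mp_mult x y \<in> G) \<and> (\<forall>x\<in>G. mp_inv x \<in> G)
     \<and> (\<exists>N::int. N \<ge> 1 \<and> (\<forall>M\<in>Gamma_princ N. \<exists>\<phi>. (M,\<phi>) \<in> G))"

fun slash :: "real \<Rightarrow> mp \<Rightarrow> (complex \<Rightarrow> complex) \<Rightarrow> complex \<Rightarrow> complex" where
  "slash k (M,\<phi>) f \<tau> = (\<phi> \<tau>) powr (complex_of_real (-2*k)) * f (moeb M \<tau>)"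

definition d_u :: "(complex \<Rightarrow> complex) \<Rightarrow> complex \<Rightarrow> complex" where
  "d_u f \<tau> = frechet_derivative f (at \<tau>) 1"

definition d_v :: "(complex \<Rightarrow> complex) \<Rightarrow> complex \<Rightarrow> complex" where
  "d_v f \<tau> = frechet_derivative f (at \<tau>) \<i>"

fun pdiff :: "bool list \<Rightarrow> (complex \<Rightarrow> complex) \<Rightarrow> complex \<Rightarrow> complex" where
  "pdiff [] f = f"
| "pdiff (b # bs) f = (if b then d_v (pdiff bs f) else d_u (pdiff bs f))"

definition smooth_on :: "complex set \<Rightarrow> (complex \<Rightarrow> complex) \<Rightarrow> bool" where
  "smooth_on S f \<longleftrightarrow> (\<forall>bs. \<forall>\<tau>\<in>S. pdiff bs f differentiable (at \<tau>))"

definition d_tau :: "(complex \<Rightarrow> complex) \<Rightarrow> complex \<Rightarrow> complex" where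
  "d_tau f \<tau> = (d_u f \<tau> - \<i> * d_v f \<tau>) / 2"

definition d_taubar :: "(complex \<Rightarrow> complex) \<Rightarrow> complex \<Rightarrow> complex" where
  "d_taubar f \<tau> = (d_u f \<tau> + \<i> * d_v f \<tau>) / 2"

definition raise_op :: "real \<Rightarrow> (complex \<Rightarrow> complex) \<Rightarrow> complex \<Rightarrow> complex" where
  "raise_op k f \<tau> = 2 * \<i> * d_tau f \<tau> + complex_of_real (k / Im \<tau>) * f \<tau>"

fun raise_pow :: "real \<Rightarrow> nat \<Rightarrow> (complex \<Rightarrow> complex) \<Rightarrow> complex \<Rightarrow> complex" where
  "raise_pow k 0 f = f"
| "raise_pow k (Suc j) f = raise_op (k + 2 * real j) (raise_pow k j f)"

definition lower_op :: "(complex \<Rightarrow> complex) \<Rightarrow> complex \<Rightarrow> complex" where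
  "lower_op f \<tau> = - 2 * \<i> * complex_of_real ((Im \<tau>)\<^sup>2) * d_taubar f \<tau>"

definition laplace :: "real \<Rightarrow> (complex \<Rightarrow> complex) \<Rightarrow> complex \<Rightarrow> complex" where
  "laplace k f \<tau> =
     - complex_of_real ((Im \<tau>)\<^sup>2) * (d_u (d_u f) \<tau> + d_v (d_v f) \<tau>)
     + \<i> * complex_of_real (k * Im \<tau>) * (d_u f \<tau> + \<i> * d_v f \<tau>)"

definition exp_growth_at_cusps :: "real \<Rightarrow> (complex \<Rightarrow> complex) \<Rightarrow> bool" where
  "exp_growth_at_cusps k f \<longleftrightarrow>
     (\<forall>\<gamma>\<in>Mp2Z. \<exists>C B. \<forall>\<tau>. Im \<tau> \<ge> B \<longrightarrow> norm (slash k \<gamma> f \<tau>) \<le> C * exp (C * Im \<tau>))"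

definition harmonic_maass_form :: "real \<Rightarrow> mp set \<Rightarrow> (complex \<Rightarrow> complex) \<Rightarrow> bool" where
  "harmonic_maass_form k G f \<longleftrightarrow>
     smooth_on uhp f
     \<and> (\<forall>\<gamma>\<in>G. \<forall>\<tau>\<in>uhp. slash k \<gamma> f \<tau> = f \<tau>)
     \<and> (\<forall>\<tau>\<in>uhp. laplace k f \<tau> = 0)
     \<and> exp_growth_at_cusps k f"

definition nderiv :: "nat \<Rightarrow> (complex \<Rightarrow> complex) \<Rightarrow> complex \<Rightarrow> complex" where
  "nderiv s f \<tau> = (d_tau ^^ s) f \<tau> / (2 * complex_of_real pi * \<i>) ^ s"

definition rc_bracket :: "real \<Rightarrow> real \<Rightarrow> nat \<Rightarrow> (complex \<Rightarrow> complex) \<Rightarrow> (complex \<Rightarrow> complex)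
                         \<Rightarrow> complex \<Rightarrow> complex" where
  "rc_bracket k l j f g \<tau> =
     (\<Sum>s=0..j. (-1) ^ s * complex_of_real ((k + real j - 1) gchoose s)
                 * complex_of_real ((l + real j - 1) gchoose (j - s))
                 * nderiv (j - s) f \<tau> * nderiv s g \<tau>)"

end

theory Submission
  imports Defs
begin


definition Dw :: "complex \<Rightarrow> (complex \<Rightarrow> complex) \<Rightarrow> complex \<Rightarrow> complex" where
  "Dw w F \<tau> = frechet_derivative F (at \<tau>) w"

lemma du_Dw: "d_u F = Dw 1 F" and dv_Dw: "d_v F = Dw \<i> F"
  by (auto simp: d_u_def d_v_def Dw_def fun_eq_iff)

lemma fd_works: "F differentiable (at \<tau>) \<Longrightarrow> (F has_derivative frechet_derivative F (at \<tau>)) (at \<tau>)"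
  using frechet_derivative_works by blast

lemma Dw_add:
  assumes "F differentiable (at \<tau>)" "G differentiable (at \<tau>)"
  shows "Dw w (\<lambda>x. F x + G x) \<tau> = Dw w F \<tau> + Dw w G \<tau>"
proof -
  have "((\<lambda>x. F x + G x) has_derivative (\<lambda>h. frechet_derivative F (at \<tau>) h + frechet_derivative G (at \<tau>) h)) (at \<tau>)"
    by (intro has_derivative_add fd_works assms)
  from frechet_derivative_at[OF this, symmetric] show ?thesis by (simp add: Dw_def)
qed

lemma Dw_mult:
  assumes "F differentiable (at \<tau>)" "G differentiable (at \<tau>)"
  shows "Dw w (\<lambda>x. F x * G x) \<tau> = F \<tau> * Dw w G \<tau> + Dw w F \<tau> * G \<tau>"
proof -
  have "((\<lambda>x. F x * G x) has_derivative (\<lambda>h. F \<tau> * frechet_derivative G (at \<tau>) h + frechet_derivative F (at \<tau>) h * G \<tau>)) (at \<tau>)"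
    by (intro has_derivative_mult fd_works assms)
  from frechet_derivative_at[OF this, symmetric] show ?thesis by (simp add: Dw_def)
qed

lemma Dw_cmult:
  assumes "F differentiable (at \<tau>)"
  shows "Dw w (\<lambda>x. c * F x) \<tau> = c * Dw w F \<tau>"
proof -
  have "((\<lambda>x. c * F x) has_derivative (\<lambda>h. c * frechet_derivative F (at \<tau>) h)) (at \<tau>)"
    by (intro has_derivative_mult_right fd_works assms)
  from frechet_derivative_at[OF this, symmetric] show ?thesis by (simp add: Dw_def)
qed

lemma Dw_sum:
  assumes "finite S" "\<And>s. s \<in> S \<Longrightarrow> F s differentiable (at \<tau>)"
  shows "Dw w (\<lambda>x. \<Sum>s\<in>S. F s x) \<tau> = (\<Sum>s\<in>S. Dw w (F s) \<tau>)"
proof -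
  have "((\<lambda>x. \<Sum>s\<in>S. F s x) has_derivative (\<lambda>h. \<Sum>s\<in>S. frechet_derivative (F s) (at \<tau>) h)) (at \<tau>)"
    by (intro has_derivative_sum fd_works assms)
  from frechet_derivative_at[OF this, symmetric] show ?thesis by (simp add: Dw_def)
qed

lemma local_has_derivative_iff:
  assumes "open S" "\<tau> \<in> S" "\<And>x. x \<in> S \<Longrightarrow> F x = G x"
  shows "(F has_derivative D) (at \<tau>) \<longleftrightarrow> (G has_derivative D) (at \<tau>)"
  using has_derivative_transform_within_open[OF _ assms(1,2), of F D UNIV G]
        has_derivative_transform_within_open[OF _ assms(1,2), of G D UNIV F] assms(3)
  by auto

lemma Dw_local:
  assumes "open S" "\<tau> \<in> S" "\<And>x. x \<in> S \<Longrightarrow> F x = G x"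
  shows "Dw w F \<tau> = Dw w G \<tau>"
proof -
  have "frechet_derivative F (at \<tau>) = frechet_derivative G (at \<tau>)"
    unfolding frechet_derivative_def using local_has_derivative_iff[OF assms] by simp
  thus ?thesis by (simp add: Dw_def)
qed

lemma diff_local:
  assumes "open S" "\<tau> \<in> S" "\<And>x. x \<in> S \<Longrightarrow> F x = G x"
  shows "F differentiable (at \<tau>) \<longleftrightarrow> G differentiable (at \<tau>)"
  unfolding differentiable_def using local_has_derivative_iff[OF assms] by simp

lemma open_uhp: "open uhp"
  unfolding uhp_def using open_halfspace_Im_gt[of 0] by simp



lemma schwarz_half:
  fixes F :: "complex \<Rightarrow> complex" and a b :: complex
  assumes S: "open S" "\<tau> \<in> S" "\<And>z. z\<in>S \<Longrightarrow> F differentiable (at z)"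
    and GA: "(Dw a F has_derivative A) (at \<tau>)"
    and e: "e > 0"
  shows "\<exists>d>0. \<forall>h. 0 < h \<and> h < d \<longrightarrow>
     norm (F (\<tau> + h *\<^sub>R a + h *\<^sub>R b) - F (\<tau> + h *\<^sub>R a) - F (\<tau> + h *\<^sub>R b) + F \<tau> - (h^2) *\<^sub>R A b)
       \<le> 3 * e * h^2 * (norm a + norm b + 1)"
proof -
  obtain r where r: "r > 0" "ball \<tau> r \<subseteq> S" using openE[OF S(1,2)] by blast
  define G where "G = Dw a F"
  have blA: "bounded_linear A" using GA has_derivative_bounded_linear by blast
  from GA[unfolded has_derivative_at_alt] e obtain d where d: "d > 0"
    "\<And>y. norm (y - \<tau>) < d \<Longrightarrow> norm (G y - G \<tau> - A (y - \<tau>)) \<le> e * norm (y - \<tau>)"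
    unfolding G_def by blast
  define K where "K = norm a + norm b + 1"
  have K: "K > 0" unfolding K_def by (smt (verit) norm_ge_zero)
  define dd where "dd = min d r / (2 * K)"
  have dd: "dd > 0" using d r K by (simp add: dd_def)
  show ?thesis
  proof (intro exI[of _ dd] conjI allI impI dd)
    fix h :: real assume h: "0 < h \<and> h < dd"
    have hK: "2 * h * K < min d r" using h K by (simp add: dd_def pos_less_divide_eq mult_ac)
    have near: "norm (y - \<tau>) < d \<and> y \<in> S" if "norm (y - \<tau>) \<le> 2 * h * (norm a + norm b)" for y
    proof -
      have "2 * h * (norm a + norm b) \<le> 2 * h * K" using h by (simp add: K_def)
      hence "norm (y - \<tau>) < min d r" using that hK by linarith
      thus ?thesis using r(2) by (auto simp: dist_norm norm_minus_commute)
    qed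
    define R where "R y = G y - G \<tau> - A (y - \<tau>)" for y
    have Rb: "norm (R y) \<le> e * norm (y - \<tau>)" if "norm (y - \<tau>) \<le> 2 * h * (norm a + norm b)" for y
      using d(2)[of y] near[OF that] unfolding R_def by blast
    define c where "c t = G (\<tau> + t *\<^sub>R a + h *\<^sub>R b) - G (\<tau> + t *\<^sub>R a)" for t
    define \<phi> where "\<phi> t = F (\<tau> + t *\<^sub>R a + h *\<^sub>R b) - F (\<tau> + t *\<^sub>R a)" for t
    have nb1: "norm (t *\<^sub>R a + h *\<^sub>R b) \<le> 2 * h * (norm a + norm b)" if "t \<in> {0..h}" for t
    proof -
      have "norm (t *\<^sub>R a + h *\<^sub>R b) \<le> norm (t *\<^sub>R a) + norm (h *\<^sub>R b)" by (rule norm_triangle_ineq)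
      also have "\<dots> = t * norm a + h * norm b" using that h by simp
      also have "\<dots> \<le> h * norm a + h * norm b" using that by (simp add: mult_right_mono)
      also have "\<dots> \<le> 2 * h * (norm a + norm b)" using h by (simp add: algebra_simps)
      finally show ?thesis .
    qed
    have nb2: "norm (t *\<^sub>R a) \<le> 2 * h * (norm a + norm b)" if "t \<in> {0..h}" for t
    proof -
      have "norm (t *\<^sub>R a) = t * norm a" using that by simp
      also have "\<dots> \<le> h * norm a" using that by (simp add: mult_right_mono)
      also have "\<dots> \<le> 2 * h * (norm a + norm b)" using h by (simp add: algebra_simps)
      finally show ?thesis .
    qed
    have nb3: "norm (h *\<^sub>R b) \<le> 2 * h * (norm a + norm b)"
      using h by (simp add: algebra_simps)
    have deriv: "(\<phi> has_derivative (\<lambda>s. s *\<^sub>R c t)) (at t within {0..h})" if t: "t \<in> {0..h}" for t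
    proof -
      define p1 where "p1 = \<tau> + t *\<^sub>R a + h *\<^sub>R b"
      define p2 where "p2 = \<tau> + t *\<^sub>R a"
      have "p1 \<in> S" using near[of p1] nb1[OF t] by (simp add: p1_def add.assoc)
      have "p2 \<in> S" using near[of p2] nb2[OF t] by (simp add: p2_def)
      have d1: "(F has_derivative frechet_derivative F (at p1)) (at p1)" using fd_works S(3) \<open>p1 \<in> S\<close> by blast
      have d2: "(F has_derivative frechet_derivative F (at p2)) (at p2)" using fd_works S(3) \<open>p2 \<in> S\<close> by blast
      have i1: "((\<lambda>t. \<tau> + t *\<^sub>R a + h *\<^sub>R b) has_derivative (\<lambda>s. s *\<^sub>R a)) (at t within {0..h})"
        by (auto intro!: derivative_eq_intros)
      have i2: "((\<lambda>t. \<tau> + t *\<^sub>R a) has_derivative (\<lambda>s. s *\<^sub>R a)) (at t within {0..h})"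
        by (auto intro!: derivative_eq_intros)
      have c1: "((\<lambda>t. F (\<tau> + t *\<^sub>R a + h *\<^sub>R b)) has_derivative (\<lambda>s. frechet_derivative F (at p1) (s *\<^sub>R a))) (at t within {0..h})"
        using has_derivative_compose[OF i1, of F] d1 by (simp add: p1_def)
      have c2: "((\<lambda>t. F (\<tau> + t *\<^sub>R a)) has_derivative (\<lambda>s. frechet_derivative F (at p2) (s *\<^sub>R a))) (at t within {0..h})"
        using has_derivative_compose[OF i2, of F] d2 by (simp add: p2_def)
      have "(\<phi> has_derivative (\<lambda>s. frechet_derivative F (at p1) (s *\<^sub>R a) - frechet_derivative F (at p2) (s *\<^sub>R a))) (at t within {0..h})"
        unfolding \<phi>_def by (rule has_derivative_diff[OF c1 c2])
      moreover have "(\<lambda>s. frechet_derivative F (at p1) (s *\<^sub>R a) - frechet_derivative F (at p2) (s *\<^sub>R a)) = (\<lambda>s. s *\<^sub>R c t)"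
      proof
        fix s
        have l1: "linear (frechet_derivative F (at p1))" using d1 has_derivative_linear by blast
        have l2: "linear (frechet_derivative F (at p2))" using d2 has_derivative_linear by blast
        show "frechet_derivative F (at p1) (s *\<^sub>R a) - frechet_derivative F (at p2) (s *\<^sub>R a) = s *\<^sub>R c t"
        proof -
          have "c t = frechet_derivative F (at p1) a - frechet_derivative F (at p2) a"
            by (simp add: c_def G_def Dw_def p1_def p2_def)
          thus ?thesis by (simp add: linear_cmul[OF l1] linear_cmul[OF l2] scaleR_diff_right)
        qed
      qed
      ultimately show ?thesis by simp
    qed
    define B where "B = 2 * e * h * (norm a + norm b)"
    have bnd: "onorm ((\<lambda>s. s *\<^sub>R c x) - (\<lambda>s. s *\<^sub>R c 0)) \<le> B" if x: "x \<in> {0..h}" for x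
    proof (rule onorm_le)
      fix s :: real
      have eq: "c x - c 0 = R (\<tau> + (x *\<^sub>R a + h *\<^sub>R b)) - R (\<tau> + x *\<^sub>R a) - R (\<tau> + h *\<^sub>R b)"
        unfolding c_def R_def using linear_simps[OF blA] by (simp add: algebra_simps)
      have "norm (c x - c 0) \<le> norm (R (\<tau> + (x *\<^sub>R a + h *\<^sub>R b))) + norm (R (\<tau> + x *\<^sub>R a)) + norm (R (\<tau> + h *\<^sub>R b))"
        unfolding eq using norm_triangle_ineq4[of "R (\<tau> + (x *\<^sub>R a + h *\<^sub>R b)) - R (\<tau> + x *\<^sub>R a)" "R (\<tau> + h *\<^sub>R b)"]
          norm_triangle_ineq4[of "R (\<tau> + (x *\<^sub>R a + h *\<^sub>R b))" "R (\<tau> + x *\<^sub>R a)"] by linarith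
      also have "\<dots> \<le> e * norm (x *\<^sub>R a + h *\<^sub>R b) + e * norm (x *\<^sub>R a) + e * norm (h *\<^sub>R b)"
        using Rb[of "\<tau> + (x *\<^sub>R a + h *\<^sub>R b)"] Rb[of "\<tau> + x *\<^sub>R a"] Rb[of "\<tau> + h *\<^sub>R b"] nb1[OF x] nb2[OF x] nb3
        by simp
      also have "\<dots> \<le> B"
      proof -
        have "norm (x *\<^sub>R a + h *\<^sub>R b) + norm (x *\<^sub>R a) + norm (h *\<^sub>R b) \<le> (x * norm a + h * norm b) + x * norm a + h * norm b"
          using x h norm_triangle_ineq[of "x *\<^sub>R a" "h *\<^sub>R b"] by simp
        also have "\<dots> \<le> 2 * h * (norm a + norm b)"
          using x mult_right_mono[of x h "norm a"] by (simp add: algebra_simps)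
        finally have *: "norm (x *\<^sub>R a + h *\<^sub>R b) + norm (x *\<^sub>R a) + norm (h *\<^sub>R b) \<le> 2 * h * (norm a + norm b)" .
        have "e * norm (x *\<^sub>R a + h *\<^sub>R b) + e * norm (x *\<^sub>R a) + e * norm (h *\<^sub>R b)
             = e * (norm (x *\<^sub>R a + h *\<^sub>R b) + norm (x *\<^sub>R a) + norm (h *\<^sub>R b))" by (simp add: algebra_simps)
        also have "\<dots> \<le> e * (2 * h * (norm a + norm b))" using * e by (intro mult_left_mono) auto
        finally show ?thesis unfolding B_def by (simp add: mult_ac)
      qed
      finally have "norm (c x - c 0) \<le> B" .
      thus "norm (((\<lambda>s. s *\<^sub>R c x) - (\<lambda>s. s *\<^sub>R c 0)) s) \<le> B * norm s"
        by (simp add: scaleR_diff_right[symmetric] mult.commute[of B] mult_left_mono)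
    qed
    have lin: "norm (\<phi> h - \<phi> 0 - h *\<^sub>R c 0) \<le> norm (h - 0) * B"
      using differentiable_bound_linearization[of 0 h "{0..h}" \<phi> "\<lambda>t s. s *\<^sub>R c t" 0 B] deriv bnd h
      by auto
    have decomp: "F (\<tau> + h *\<^sub>R a + h *\<^sub>R b) - F (\<tau> + h *\<^sub>R a) - F (\<tau> + h *\<^sub>R b) + F \<tau> - (h^2) *\<^sub>R A b
        = (\<phi> h - \<phi> 0 - h *\<^sub>R c 0) + h *\<^sub>R R (\<tau> + h *\<^sub>R b)"
      unfolding \<phi>_def c_def R_def using linear_simps[OF blA]
      by (simp add: algebra_simps power2_eq_square scaleR_diff_right)
    have "norm (h *\<^sub>R R (\<tau> + h *\<^sub>R b)) \<le> h * (e * (h * norm b))"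
      using Rb[of "\<tau> + h *\<^sub>R b"] nb3 h by (simp add: mult_left_mono)
    hence "norm (F (\<tau> + h *\<^sub>R a + h *\<^sub>R b) - F (\<tau> + h *\<^sub>R a) - F (\<tau> + h *\<^sub>R b) + F \<tau> - (h^2) *\<^sub>R A b)
        \<le> h * B + h * (e * (h * norm b))"
    proof -
      have r1: "norm (R (\<tau> + h *\<^sub>R b)) \<le> e * (h * norm b)" using Rb[of "\<tau> + h *\<^sub>R b"] nb3 h by simp
      have r2: "h * norm (R (\<tau> + h *\<^sub>R b)) \<le> h * (e * (h * norm b))" using mult_left_mono[OF r1, of h] h by simp
      have r3: "norm (h *\<^sub>R R (\<tau> + h *\<^sub>R b)) = h * norm (R (\<tau> + h *\<^sub>R b))" using h by simp
      have r4: "norm (\<phi> h - \<phi> 0 - h *\<^sub>R c 0) \<le> h * B" using lin h by simp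
      show ?thesis unfolding decomp using r4 r2 r3 norm_triangle_ineq[of "\<phi> h - \<phi> 0 - h *\<^sub>R c 0" "h *\<^sub>R R (\<tau> + h *\<^sub>R b)"]
        by linarith
    qed
    also have "\<dots> \<le> 3 * e * h^2 * (norm a + norm b + 1)"
    proof -
      have "h * B + h * (e * (h * norm b)) = e * h^2 * (2 * norm a + 3 * norm b)"
        by (simp add: B_def power2_eq_square algebra_simps)
      also have "\<dots> \<le> e * h^2 * (3 * (norm a + norm b + 1))"
        using e h by (intro mult_left_mono) auto
      finally show ?thesis by (simp add: algebra_simps)
    qed
    finally show "norm (F (\<tau> + h *\<^sub>R a + h *\<^sub>R b) - F (\<tau> + h *\<^sub>R a) - F (\<tau> + h *\<^sub>R b) + F \<tau> - (h^2) *\<^sub>R A b)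
       \<le> 3 * e * h^2 * (norm a + norm b + 1)" .
  qed
qed

lemma schwarz:
  fixes F :: "complex \<Rightarrow> complex" and a b :: complex
  assumes S: "open S" "\<tau> \<in> S" "\<And>z. z\<in>S \<Longrightarrow> F differentiable (at z)"
    and da: "Dw a F differentiable (at \<tau>)" and db: "Dw b F differentiable (at \<tau>)"
  shows "Dw b (Dw a F) \<tau> = Dw a (Dw b F) \<tau>"
proof -
  define A where "A = frechet_derivative (Dw a F) (at \<tau>)"
  define B where "B = frechet_derivative (Dw b F) (at \<tau>)"
  have GA: "(Dw a F has_derivative A) (at \<tau>)" unfolding A_def using fd_works[OF da] .
  have GB: "(Dw b F has_derivative B) (at \<tau>)" unfolding B_def using fd_works[OF db] .
  define K where "K = norm a + norm b + 1"
  have K: "K > 0" unfolding K_def by (smt (verit) norm_ge_zero)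
  have X: "norm (A b - B a) \<le> 6 * e * K" if e: "e > 0" for e
  proof -
    obtain d1 where d1: "d1 > 0" "\<And>h. 0 < h \<and> h < d1 \<Longrightarrow>
     norm (F (\<tau> + h *\<^sub>R a + h *\<^sub>R b) - F (\<tau> + h *\<^sub>R a) - F (\<tau> + h *\<^sub>R b) + F \<tau> - (h^2) *\<^sub>R A b)
       \<le> 3 * e * h^2 * (norm a + norm b + 1)"
      using schwarz_half[OF S GA e, of b] by blast
    obtain d2 where d2: "d2 > 0" "\<And>h. 0 < h \<and> h < d2 \<Longrightarrow>
     norm (F (\<tau> + h *\<^sub>R b + h *\<^sub>R a) - F (\<tau> + h *\<^sub>R b) - F (\<tau> + h *\<^sub>R a) + F \<tau> - (h^2) *\<^sub>R B a)
       \<le> 3 * e * h^2 * (norm b + norm a + 1)"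
      using schwarz_half[OF S GB e, of a] by blast
    define h where "h = min d1 d2 / 2"
    have h: "0 < h" "h < d1" "h < d2" using d1 d2 by (auto simp: h_def)
    define \<Delta> where "\<Delta> = F (\<tau> + h *\<^sub>R a + h *\<^sub>R b) - F (\<tau> + h *\<^sub>R a) - F (\<tau> + h *\<^sub>R b) + F \<tau>"
    have e1: "norm (\<Delta> - (h^2) *\<^sub>R A b) \<le> 3 * e * h^2 * K"
      using d1(2)[of h] h unfolding \<Delta>_def K_def by simp
    have e2: "norm (\<Delta> - (h^2) *\<^sub>R B a) \<le> 3 * e * h^2 * K"
    proof -
      have p: "\<tau> + h *\<^sub>R b + h *\<^sub>R a = \<tau> + h *\<^sub>R a + h *\<^sub>R b" by (simp add: algebra_simps)
      have q: "\<Delta> = F (\<tau> + h *\<^sub>R b + h *\<^sub>R a) - F (\<tau> + h *\<^sub>R b) - F (\<tau> + h *\<^sub>R a) + F \<tau>"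
        unfolding \<Delta>_def p by (simp add: algebra_simps)
      have k: "norm b + norm a + 1 = K" by (simp add: K_def)
      show ?thesis unfolding q using d2(2)[of h] h unfolding k by simp
    qed
    have "(h^2) *\<^sub>R (A b - B a) = (\<Delta> - (h^2) *\<^sub>R B a) - (\<Delta> - (h^2) *\<^sub>R A b)"
      by (simp add: scaleR_diff_right)
    hence "norm ((h^2) *\<^sub>R (A b - B a)) \<le> norm (\<Delta> - (h^2) *\<^sub>R B a) + norm (\<Delta> - (h^2) *\<^sub>R A b)"
      by (metis norm_triangle_ineq4)
    moreover have "norm ((h^2) *\<^sub>R (A b - B a)) = h^2 * norm (A b - B a)" by simp
    moreover have "h^2 * (6 * e * K) = 3 * e * h^2 * K + 3 * e * h^2 * K" by (simp add: algebra_simps)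
    ultimately have "h^2 * norm (A b - B a) \<le> h^2 * (6 * e * K)" using e1 e2 by linarith
    thus ?thesis using h by (simp add: mult_le_cancel_left)
  qed
  have "norm (A b - B a) \<le> 0"
  proof (rule field_le_epsilon)
    fix e :: real assume "e > 0"
    hence "e / (6 * K) > 0" using K by simp
    from X[OF this] K show "norm (A b - B a) \<le> 0 + e" by simp
  qed
  hence "A b = B a" by simp
  thus ?thesis by (simp add: Dw_def A_def B_def)
qed



lemma pdiff_du: "pdiff bs (d_u F) = pdiff (bs @ [False]) F"
  by (induction bs) auto

lemma pdiff_dv: "pdiff bs (d_v F) = pdiff (bs @ [True]) F"
  by (induction bs) auto

lemma sm_du: "smooth_on uhp F \<Longrightarrow> smooth_on uhp (d_u F)"
  unfolding smooth_on_def pdiff_du by blast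

lemma sm_dv: "smooth_on uhp F \<Longrightarrow> smooth_on uhp (d_v F)"
  unfolding smooth_on_def pdiff_dv by blast

lemma sm_diff: "smooth_on uhp F \<Longrightarrow> \<tau> \<in> uhp \<Longrightarrow> F differentiable (at \<tau>)"
  unfolding smooth_on_def using pdiff.simps(1) by metis

lemma sm_lin_aux:
  assumes F: "smooth_on uhp F" and G: "smooth_on uhp G"
  shows "\<forall>\<tau>\<in>uhp. pdiff bs (\<lambda>x. c1 * F x + c2 * G x) \<tau> = c1 * pdiff bs F \<tau> + c2 * pdiff bs G \<tau>"
proof (induction bs)
  case Nil
  then show ?case by simp
next
  case (Cons b bs)
  show ?case
  proof
    fix \<tau> assume t: "\<tau> \<in> uhp"
    have dF: "pdiff bs F differentiable (at \<tau>)" using F t unfolding smooth_on_def by blast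
    have dG: "pdiff bs G differentiable (at \<tau>)" using G t unfolding smooth_on_def by blast
    have loc: "Dw w (pdiff bs (\<lambda>x. c1 * F x + c2 * G x)) \<tau> = Dw w (\<lambda>x. c1 * pdiff bs F x + c2 * pdiff bs G x) \<tau>" for w
      by (rule Dw_local[OF open_uhp t]) (use Cons.IH in auto)
    have lin: "Dw w (\<lambda>x. c1 * pdiff bs F x + c2 * pdiff bs G x) \<tau> = c1 * Dw w (pdiff bs F) \<tau> + c2 * Dw w (pdiff bs G) \<tau>" for w
      using dF dG by (simp add: Dw_add Dw_cmult differentiable_mult)
    show "pdiff (b # bs) (\<lambda>x. c1 * F x + c2 * G x) \<tau> = c1 * pdiff (b # bs) F \<tau> + c2 * pdiff (b # bs) G \<tau>"
      by (simp add: du_Dw dv_Dw loc lin)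
  qed
qed

lemma sm_lin:
  assumes F: "smooth_on uhp F" and G: "smooth_on uhp G"
  shows "smooth_on uhp (\<lambda>x. c1 * F x + c2 * G x)"
  unfolding smooth_on_def
proof (intro allI ballI)
  fix bs \<tau> assume t: "\<tau> \<in> uhp"
  have dF: "pdiff bs F differentiable (at \<tau>)" using F t unfolding smooth_on_def by blast
  have dG: "pdiff bs G differentiable (at \<tau>)" using G t unfolding smooth_on_def by blast
  have "(\<lambda>x. c1 * pdiff bs F x + c2 * pdiff bs G x) differentiable (at \<tau>)"
    using dF dG by (intro differentiable_add differentiable_mult differentiable_const) auto
  thus "pdiff bs (\<lambda>x. c1 * F x + c2 * G x) differentiable (at \<tau>)"
  proof -
    have eq: "\<And>x. x \<in> uhp \<Longrightarrow> pdiff bs (\<lambda>x. c1 * F x + c2 * G x) x = c1 * pdiff bs F x + c2 * pdiff bs G x"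
      using sm_lin_aux[OF F G] by blast
    have "pdiff bs (\<lambda>x. c1 * F x + c2 * G x) differentiable (at \<tau>) \<longleftrightarrow> (\<lambda>x. c1 * pdiff bs F x + c2 * pdiff bs G x) differentiable (at \<tau>)"
      by (rule diff_local[OF open_uhp t]) (simp add: eq)
    thus ?thesis using \<open>(\<lambda>x. c1 * pdiff bs F x + c2 * pdiff bs G x) differentiable (at \<tau>)\<close> by blast
  qed
qed

lemma dtau_eq: "d_tau F = (\<lambda>x. (1/2) * d_u F x + (- \<i>/2) * d_v F x)"
  by (auto simp: d_tau_def fun_eq_iff field_simps)

lemma dtaubar_eq: "d_taubar F = (\<lambda>x. (1/2) * d_u F x + (\<i>/2) * d_v F x)"
  by (auto simp: d_taubar_def fun_eq_iff field_simps)

lemma sm_dtau: "smooth_on uhp F \<Longrightarrow> smooth_on uhp (d_tau F)"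
  unfolding dtau_eq by (intro sm_lin sm_du sm_dv)

lemma sm_dtaubar: "smooth_on uhp F \<Longrightarrow> smooth_on uhp (d_taubar F)"
  unfolding dtaubar_eq by (intro sm_lin sm_du sm_dv)

lemma sm_funpow: "smooth_on uhp F \<Longrightarrow> smooth_on uhp ((d_tau ^^ n) F)"
  by (induction n) (auto intro: sm_dtau)

lemma dtau_Dw: "d_tau F \<tau> = (Dw 1 F \<tau> - \<i> * Dw \<i> F \<tau>) / 2"
  by (simp add: d_tau_def du_Dw dv_Dw)

lemma dtaubar_Dw: "d_taubar F \<tau> = (Dw 1 F \<tau> + \<i> * Dw \<i> F \<tau>) / 2"
  by (simp add: d_taubar_def du_Dw dv_Dw)

lemma dtau_mult: "A differentiable (at \<tau>) \<Longrightarrow> B differentiable (at \<tau>) \<Longrightarrow>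
  d_tau (\<lambda>x. A x * B x) \<tau> = A \<tau> * d_tau B \<tau> + d_tau A \<tau> * B \<tau>"
  by (simp add: dtau_Dw Dw_mult field_simps)

lemma dtaubar_mult: "A differentiable (at \<tau>) \<Longrightarrow> B differentiable (at \<tau>) \<Longrightarrow>
  d_taubar (\<lambda>x. A x * B x) \<tau> = A \<tau> * d_taubar B \<tau> + d_taubar A \<tau> * B \<tau>"
  by (simp add: dtaubar_Dw Dw_mult field_simps)

lemma dtau_cmult: "A differentiable (at \<tau>) \<Longrightarrow> d_tau (\<lambda>x. c * A x) \<tau> = c * d_tau A \<tau>"
  by (simp add: dtau_Dw Dw_cmult field_simps)

lemma dtaubar_cmult: "A differentiable (at \<tau>) \<Longrightarrow> d_taubar (\<lambda>x. c * A x) \<tau> = c * d_taubar A \<tau>"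
  by (simp add: dtaubar_Dw Dw_cmult field_simps)

lemma dtau_add: "A differentiable (at \<tau>) \<Longrightarrow> B differentiable (at \<tau>) \<Longrightarrow>
  d_tau (\<lambda>x. A x + B x) \<tau> = d_tau A \<tau> + d_tau B \<tau>"
  by (simp add: dtau_Dw Dw_add field_simps)

lemma dtaubar_add: "A differentiable (at \<tau>) \<Longrightarrow> B differentiable (at \<tau>) \<Longrightarrow>
  d_taubar (\<lambda>x. A x + B x) \<tau> = d_taubar A \<tau> + d_taubar B \<tau>"
  by (simp add: dtaubar_Dw Dw_add field_simps)

lemma dtau_sum: "finite S \<Longrightarrow> (\<And>s. s \<in> S \<Longrightarrow> A s differentiable (at \<tau>)) \<Longrightarrow>
  d_tau (\<lambda>x. \<Sum>s\<in>S. A s x) \<tau> = (\<Sum>s\<in>S. d_tau (A s) \<tau>)"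
  by (simp add: dtau_Dw Dw_sum sum_subtractf[symmetric] sum_divide_distrib[symmetric] sum_distrib_left)

lemma dtaubar_sum: "finite S \<Longrightarrow> (\<And>s. s \<in> S \<Longrightarrow> A s differentiable (at \<tau>)) \<Longrightarrow>
  d_taubar (\<lambda>x. \<Sum>s\<in>S. A s x) \<tau> = (\<Sum>s\<in>S. d_taubar (A s) \<tau>)"
  by (simp add: dtaubar_Dw Dw_sum sum.distrib[symmetric] sum_divide_distrib[symmetric] sum_distrib_left)

lemma dtau_local: "open S \<Longrightarrow> \<tau> \<in> S \<Longrightarrow> (\<And>x. x \<in> S \<Longrightarrow> A x = B x) \<Longrightarrow> d_tau A \<tau> = d_tau B \<tau>"
  by (simp add: dtau_Dw Dw_local[of S \<tau> A B])

lemma dtaubar_local: "open S \<Longrightarrow> \<tau> \<in> S \<Longrightarrow> (\<And>x. x \<in> S \<Longrightarrow> A x = B x) \<Longrightarrow> d_taubar A \<tau> = d_taubar B \<tau>"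
  by (simp add: dtaubar_Dw Dw_local[of S \<tau> A B])

definition vp :: "real \<Rightarrow> complex \<Rightarrow> complex" where
  "vp a \<tau> = complex_of_real (Im \<tau> powr a)"

lemma vp_has_derivative:
  assumes "Im \<tau> > 0"
  shows "(vp a has_derivative (\<lambda>h. complex_of_real (a * Im \<tau> powr (a - 1) * Im h))) (at \<tau>)"
proof -
  have "((\<lambda>x. Im x powr a) has_derivative (\<lambda>h. a * Im \<tau> powr (a - 1) * Im h)) (at \<tau>)"
    using assms by (auto intro!: derivative_eq_intros simp: powr_diff mult_ac)
  hence "((\<lambda>x. complex_of_real (Im x powr a)) has_derivative (\<lambda>h. complex_of_real (a * Im \<tau> powr (a - 1) * Im h))) (at \<tau>)"
    by (rule has_derivative_of_real)
  thus ?thesis unfolding vp_def[abs_def] .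
qed

lemma vp_diff: "\<tau> \<in> uhp \<Longrightarrow> vp a differentiable (at \<tau>)"
  using vp_has_derivative unfolding uhp_def differentiable_def by blast

lemma Dw_vp: "\<tau> \<in> uhp \<Longrightarrow> Dw w (vp a) \<tau> = complex_of_real (a * Im \<tau> powr (a - 1) * Im w)"
  using frechet_derivative_at[OF vp_has_derivative[of \<tau> a], symmetric] unfolding uhp_def Dw_def by auto

lemma dtau_vp: "\<tau> \<in> uhp \<Longrightarrow> d_tau (vp a) \<tau> = - \<i> * of_real a / 2 * vp (a - 1) \<tau>"
  by (simp add: dtau_Dw Dw_vp vp_def)

lemma dtaubar_vp: "\<tau> \<in> uhp \<Longrightarrow> d_taubar (vp a) \<tau> = \<i> * of_real a / 2 * vp (a - 1) \<tau>"
  by (simp add: dtaubar_Dw Dw_vp vp_def)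

lemma vp_mult: "\<tau> \<in> uhp \<Longrightarrow> vp a \<tau> * vp b \<tau> = vp (a + b) \<tau>"
  by (simp add: vp_def powr_add)

lemma vp_0: "\<tau> \<in> uhp \<Longrightarrow> vp 0 \<tau> = 1"
  by (simp add: vp_def uhp_def)

lemma vp_nz: "\<tau> \<in> uhp \<Longrightarrow> vp a \<tau> \<noteq> 0"
  by (simp add: vp_def uhp_def)



lemma Dw_lin:
  assumes "A differentiable at \<tau>" "B differentiable at \<tau>"
  shows "Dw w (\<lambda>x. c1 * A x + c2 * B x) \<tau> = c1 * Dw w A \<tau> + c2 * Dw w B \<tau>"
proof -
  have a: "(\<lambda>x. c1 * A x) differentiable at \<tau>" using assms(1) by (simp add: differentiable_mult)
  have b: "(\<lambda>x. c2 * B x) differentiable at \<tau>" using assms(2) by (simp add: differentiable_mult)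
  show ?thesis using Dw_add[OF a b, of w] Dw_cmult[OF assms(1), of w c1] Dw_cmult[OF assms(2), of w c2] by simp
qed

lemma dtau_lin:
  assumes "A differentiable at \<tau>" "B differentiable at \<tau>"
  shows "d_tau (\<lambda>x. c1 * A x + c2 * B x) \<tau> = c1 * d_tau A \<tau> + c2 * d_tau B \<tau>"
  unfolding dtau_Dw Dw_lin[OF assms] by (simp add: field_simps)

lemma dtaubar_lin:
  assumes "A differentiable at \<tau>" "B differentiable at \<tau>"
  shows "d_taubar (\<lambda>x. c1 * A x + c2 * B x) \<tau> = c1 * d_taubar A \<tau> + c2 * d_taubar B \<tau>"
  unfolding dtaubar_Dw Dw_lin[OF assms] by (simp add: field_simps)

lemma schwarz_uv:
  assumes "smooth_on uhp F" "\<tau> \<in> uhp"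
  shows "Dw \<i> (Dw 1 F) \<tau> = Dw 1 (Dw \<i> F) \<tau>"
proof (rule schwarz[OF open_uhp assms(2)])
  show "\<And>z. z \<in> uhp \<Longrightarrow> F differentiable at z" using sm_diff assms(1) by blast
  show "Dw 1 F differentiable at \<tau>" using sm_diff[OF sm_du[OF assms(1)] assms(2)] by (simp add: du_Dw)
  show "Dw \<i> F differentiable at \<tau>" using sm_diff[OF sm_dv[OF assms(1)] assms(2)] by (simp add: dv_Dw)
qed

lemma dtau_dtaubar_expand:
  assumes "smooth_on uhp F" "\<tau> \<in> uhp"
  shows "d_tau (d_taubar F) \<tau> = (Dw 1 (Dw 1 F) \<tau> - \<i> * Dw \<i> (Dw 1 F) \<tau> + \<i> * Dw 1 (Dw \<i> F) \<tau> + Dw \<i> (Dw \<i> F) \<tau>) / 4"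
proof -
  have d1: "Dw 1 F differentiable at \<tau>" using sm_diff[OF sm_du[OF assms(1)] assms(2)] by (simp add: du_Dw)
  have d2: "Dw \<i> F differentiable at \<tau>" using sm_diff[OF sm_dv[OF assms(1)] assms(2)] by (simp add: dv_Dw)
  have eq: "d_taubar F = (\<lambda>x. (1/2) * Dw 1 F x + (\<i>/2) * Dw \<i> F x)"
    by (simp only: dtaubar_eq du_Dw dv_Dw)
  have X: "d_tau (d_taubar F) \<tau> = (1/2) * d_tau (Dw 1 F) \<tau> + (\<i>/2) * d_tau (Dw \<i> F) \<tau>"
    unfolding eq by (rule dtau_lin[OF d1 d2])
  show ?thesis unfolding X dtau_Dw[of "Dw 1 F"] dtau_Dw[of "Dw \<i> F"] by (simp add: field_simps)
qed

lemma dtaubar_dtau_expand: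
  assumes "smooth_on uhp F" "\<tau> \<in> uhp"
  shows "d_taubar (d_tau F) \<tau> = (Dw 1 (Dw 1 F) \<tau> + \<i> * Dw \<i> (Dw 1 F) \<tau> - \<i> * Dw 1 (Dw \<i> F) \<tau> + Dw \<i> (Dw \<i> F) \<tau>) / 4"
proof -
  have d1: "Dw 1 F differentiable at \<tau>" using sm_diff[OF sm_du[OF assms(1)] assms(2)] by (simp add: du_Dw)
  have d2: "Dw \<i> F differentiable at \<tau>" using sm_diff[OF sm_dv[OF assms(1)] assms(2)] by (simp add: dv_Dw)
  have eq: "d_tau F = (\<lambda>x. (1/2) * Dw 1 F x + (- \<i>/2) * Dw \<i> F x)"
    by (simp only: dtau_eq du_Dw dv_Dw)
  have X: "d_taubar (d_tau F) \<tau> = (1/2) * d_taubar (Dw 1 F) \<tau> + (- \<i>/2) * d_taubar (Dw \<i> F) \<tau>"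
    unfolding eq by (rule dtaubar_lin[OF d1 d2])
  show ?thesis unfolding X dtaubar_Dw[of "Dw 1 F"] dtaubar_Dw[of "Dw \<i> F"] by (simp add: field_simps)
qed

lemma dtau_dtaubar_comm:
  assumes "smooth_on uhp F" "\<tau> \<in> uhp"
  shows "d_tau (d_taubar F) \<tau> = d_taubar (d_tau F) \<tau>"
proof -
  have "d_tau (d_taubar F) \<tau> = (Dw 1 (Dw 1 F) \<tau> + Dw \<i> (Dw \<i> F) \<tau>) / 4"
    unfolding dtau_dtaubar_expand[OF assms] schwarz_uv[OF assms] by (simp add: algebra_simps)
  moreover have "d_taubar (d_tau F) \<tau> = (Dw 1 (Dw 1 F) \<tau> + Dw \<i> (Dw \<i> F) \<tau>) / 4"
    unfolding dtaubar_dtau_expand[OF assms] schwarz_uv[OF assms] by (simp add: algebra_simps)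
  ultimately show ?thesis by (rule trans[OF _ sym])
qed

lemma harmonic_eq:
  assumes sm: "smooth_on uhp f" and t: "\<tau> \<in> uhp" and lap: "laplace k f \<tau> = 0"
  shows "d_tau (d_taubar f) \<tau> = \<i> * of_real k / (2 * of_real (Im \<tau>)) * d_taubar f \<tau>"
proof -
  have v: "Im \<tau> > 0" using t by (simp add: uhp_def)
  define S where "S = Dw 1 (Dw 1 f) \<tau> + Dw \<i> (Dw \<i> f) \<tau>"
  define T where "T = Dw 1 f \<tau> + \<i> * Dw \<i> f \<tau>"
  have e1: "d_tau (d_taubar f) \<tau> = S / 4"
    unfolding dtau_dtaubar_expand[OF sm t] schwarz_uv[OF sm t] S_def by (simp add: algebra_simps)
  have "- complex_of_real ((Im \<tau>)\<^sup>2) * S + \<i> * complex_of_real (k * Im \<tau>) * T = 0"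
    using lap by (simp add: laplace_def du_Dw dv_Dw S_def T_def)
  hence "\<i> * complex_of_real (k * Im \<tau>) * T - complex_of_real ((Im \<tau>)\<^sup>2) * S = 0"
    by (simp add: algebra_simps)
  hence A: "complex_of_real ((Im \<tau>)\<^sup>2) * S = \<i> * complex_of_real (k * Im \<tau>) * T" by simp
  have nz: "complex_of_real ((Im \<tau>)\<^sup>2) \<noteq> 0" using v by simp
  have "S = \<i> * complex_of_real (k * Im \<tau>) * T / complex_of_real ((Im \<tau>)\<^sup>2)"
    using A nz by (simp add: eq_divide_eq mult.commute)
  also have "\<dots> = \<i> * of_real k / of_real (Im \<tau>) * T"
    using v by (simp add: power2_eq_square field_simps)
  finally have S: "S = \<i> * of_real k / of_real (Im \<tau>) * T" .
  have Tdb: "T = 2 * d_taubar f \<tau>" by (simp add: dtaubar_Dw T_def)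
  show ?thesis unfolding e1 S Tdb using v by (simp add: field_simps)
qed

lemma vp_m1: "\<tau> \<in> uhp \<Longrightarrow> vp (-1) \<tau> = 1 / of_real (Im \<tau>)"
  by (simp add: vp_def uhp_def powr_minus divide_inverse)

lemma vp_inv: "\<tau> \<in> uhp \<Longrightarrow> complex_of_real (c / Im \<tau>) = of_real c * vp (-1) \<tau>"
  by (simp add: vp_def uhp_def powr_minus divide_inverse)

lemma dtaubar_pow:
  assumes sm: "smooth_on uhp f" and lap: "\<forall>\<tau>\<in>uhp. laplace k f \<tau> = 0"
  shows "\<forall>\<tau>\<in>uhp. d_taubar ((d_tau ^^ n) f) \<tau> = (\<i>/2)^n * of_real (pochhammer k n) * vp (- real n) \<tau> * d_taubar f \<tau>"
proof (induction n)
  case 0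
  then show ?case by (simp add: vp_0)
next
  case (Suc n)
  show ?case
  proof
    fix \<tau> assume t: "\<tau> \<in> uhp"
    define c where "c = (\<i>/2)^n * of_real (pochhammer k n)"
    have smn: "smooth_on uhp ((d_tau ^^ n) f)" by (rule sm_funpow[OF sm])
    have "d_taubar ((d_tau ^^ Suc n) f) \<tau> = d_taubar (d_tau ((d_tau ^^ n) f)) \<tau>" by simp
    also have "\<dots> = d_tau (d_taubar ((d_tau ^^ n) f)) \<tau>" using dtau_dtaubar_comm[OF smn t] by simp
    also have "\<dots> = d_tau (\<lambda>x. c * (vp (- real n) x * d_taubar f x)) \<tau>"
      by (rule dtau_local[OF open_uhp t]) (use Suc.IH in \<open>simp add: c_def mult_ac\<close>)
    also have "\<dots> = c * (vp (- real n) \<tau> * d_tau (d_taubar f) \<tau> + d_tau (vp (- real n)) \<tau> * d_taubar f \<tau>)"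
    proof -
      have d1: "vp (- real n) differentiable at \<tau>" by (rule vp_diff[OF t])
      have d2: "d_taubar f differentiable at \<tau>" by (rule sm_diff[OF sm_dtaubar[OF sm] t])
      show ?thesis using d1 d2 by (simp add: dtau_cmult dtau_mult differentiable_mult)
    qed
    also have "\<dots> = c * (\<i> / 2 * (of_real k + of_nat n)) * vp (- real (Suc n)) \<tau> * d_taubar f \<tau>"
    proof -
      have h: "d_tau (d_taubar f) \<tau> = \<i> * of_real k / 2 * vp (-1) \<tau> * d_taubar f \<tau>"
        using harmonic_eq[OF sm t lap[rule_format, OF t]] vp_m1[OF t] by (simp add: field_simps)
      have m1: "vp (- real n - 1) \<tau> = vp (- real n) \<tau> * vp (-1) \<tau>" using vp_mult[OF t, of "- real n" "-1"] by simp
      have m2: "vp (- real (Suc n)) \<tau> = vp (- real n - 1) \<tau>" by (rule arg_cong[where f="\<lambda>a. vp a \<tau>"]) simp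
      show ?thesis unfolding h dtau_vp[OF t] m2 m1
        by (simp add: algebra_simps)
    qed
    also have "\<dots> = (\<i>/2)^(Suc n) * of_real (pochhammer k (Suc n)) * vp (- real (Suc n)) \<tau> * d_taubar f \<tau>"
      by (simp add: c_def pochhammer_Suc field_simps)
    finally show "d_taubar ((d_tau ^^ Suc n) f) \<tau> = (\<i>/2)^(Suc n) * of_real (pochhammer k (Suc n)) * vp (- real (Suc n)) \<tau> * d_taubar f \<tau>" .
  qed
qed



definition acR :: "real \<Rightarrow> nat \<Rightarrow> nat \<Rightarrow> real" where
  "acR k j r = real (j choose r) * pochhammer (k + real r) (j - r)"

definition acoef :: "real \<Rightarrow> nat \<Rightarrow> nat \<Rightarrow> complex" where
  "acoef k j r = (2 * \<i>) ^ r * of_real (acR k j r)"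

lemma binom_id: "r < j \<Longrightarrow> real (Suc r) * real (j choose Suc r) = real (j - r) * real (j choose r)"
proof -
  assume "r < j"
  have "Suc r * (j choose Suc r) = j * (j - 1 choose r)" by (rule binomial_absorption)
  also have "\<dots> = (j - r) * (j choose r)" by (rule binomial_absorb_comp[symmetric])
  finally have "Suc r * (j choose Suc r) = (j - r) * (j choose r)" .
  hence "real (Suc r * (j choose Suc r)) = real ((j - r) * (j choose r))" by simp
  thus ?thesis by (simp only: of_nat_mult)
qed

lemma acR_0: "acR k (Suc j) 0 = (k + real j) * acR k j 0"
  by (simp add: acR_def pochhammer_Suc)

lemma acR_rec:
  assumes "r \<le> j"
  shows "acR k (Suc j) (Suc r) = (k + real j + real r + 1) * acR k j (Suc r) + acR k j r"
proof (cases "r = j")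
  case True
  then show ?thesis by (simp add: acR_def)
next
  case False
  hence rj: "r < j" using assms by simp
  define m where "m = j - r - 1"
  have jr: "j - r = Suc m" using rj by (simp add: m_def)
  have jr2: "j - Suc r = m" using rj by (simp add: m_def)
  have jr3: "Suc j - Suc r = Suc m" using rj by (simp add: m_def)
  define Q where "Q = pochhammer (k + real r + 1) m"
  have P1: "pochhammer (k + real (Suc r)) (Suc m) = Q * (k + real j)"
    unfolding Q_def pochhammer_Suc using rj by (simp add: m_def add_ac of_nat_diff)
  have P2: "pochhammer (k + real (Suc r)) m = Q" unfolding Q_def by (simp add: add_ac)
  have P3: "pochhammer (k + real r) (Suc m) = (k + real r) * Q"
    unfolding Q_def pochhammer_rec by (simp add: add_ac)
  have B: "real (Suc j choose Suc r) = real (j choose r) + real (j choose Suc r)"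
    by (simp add: binomial_Suc_Suc)
  have C: "real (Suc r) * real (j choose Suc r) = real (j - r) * real (j choose r)" by (rule binom_id[OF rj])
  have jr4: "real (j - r) = real j - real r" using rj by (simp add: of_nat_diff)
  show ?thesis
    unfolding acR_def jr jr2 jr3 P1 P2 P3 B
    using C unfolding jr4 apply (simp add: algebra_simps) by (metis distrib_left)
qed

lemma acoef_0: "acoef k (Suc j) 0 = of_real (k + real j) * acoef k j 0"
  by (simp add: acoef_def acR_0)

lemma acoef_rec: "r \<le> j \<Longrightarrow> acoef k (Suc j) (Suc r) = of_real (k + real j + real r + 1) * acoef k j (Suc r) + 2 * \<i> * acoef k j r"
  by (simp add: acoef_def acR_rec algebra_simps)

lemma acoef_top: "acoef k j (Suc j) = 0"
  by (simp add: acoef_def acR_def)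


lemma raise_expand:
  assumes sm: "smooth_on uhp f"
  shows "\<forall>\<tau>\<in>uhp. raise_pow k j f \<tau> = (\<Sum>r\<le>j. acoef k j r * vp (real r - real j) \<tau> * (d_tau ^^ r) f \<tau>)"
proof (induction j)
  case 0
  show ?case by (auto simp: acoef_def acR_def vp_0)
next
  case (Suc j)
  show ?case
  proof
    fix \<tau> assume t: "\<tau> \<in> uhp"
    define X where "X r = (d_tau ^^ r) f \<tau>" for r
    define W where "W r = vp (real r - real (Suc j)) \<tau>" for r
    define T where "T r x = acoef k j r * vp (real r - real j) x * (d_tau ^^ r) f x" for r x
    define U where "U r = of_real (k + real j + real r) * acoef k j r * W r * X r" for r
    have dF: "(d_tau ^^ r) f differentiable at \<tau>" for r by (rule sm_diff[OF sm_funpow[OF sm] t])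
    have dA: "(\<lambda>y. acoef k j r * vp (real r - real j) y) differentiable at \<tau>" for r
      using vp_diff[OF t] by (simp add: differentiable_mult)
    have dT: "T r differentiable at \<tau>" for r
      unfolding T_def using dA[of r] dF[of r] by (simp add: differentiable_mult)
    have WS: "vp (real r - real j) \<tau> = W (Suc r)" for r
      unfolding W_def by (rule arg_cong[where f="\<lambda>a. vp a \<tau>"]) simp
    have W1: "vp (real r - real j - 1) \<tau> = W r" for r
      unfolding W_def by (rule arg_cong[where f="\<lambda>a. vp a \<tau>"]) simp
    have Wm: "vp (-1) \<tau> * W (Suc r) = W r" for r
      unfolding WS[symmetric] W1[symmetric] using vp_mult[OF t, of "-1" "real r - real j"] by (simp add: algebra_simps)
    have dR: "d_tau (raise_pow k j f) \<tau> = (\<Sum>r\<le>j. d_tau (T r) \<tau>)"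
    proof -
      have "d_tau (raise_pow k j f) \<tau> = d_tau (\<lambda>x. \<Sum>r\<le>j. T r x) \<tau>"
        by (rule dtau_local[OF open_uhp t]) (use Suc.IH in \<open>simp add: T_def\<close>)
      also have "\<dots> = (\<Sum>r\<le>j. d_tau (T r) \<tau>)" by (rule dtau_sum) (auto simp: dT)
      finally show ?thesis .
    qed
    have dTr: "d_tau (T r) \<tau> = acoef k j r * (W (Suc r) * X (Suc r)) + acoef k j r * (- \<i> * of_real (real r - real j) / 2) * W r * X r" for r
    proof -
      have "T r = (\<lambda>x. (\<lambda>y. acoef k j r * vp (real r - real j) y) x * (d_tau ^^ r) f x)" by (simp add: T_def fun_eq_iff)
      hence "d_tau (T r) \<tau> = acoef k j r * vp (real r - real j) \<tau> * d_tau ((d_tau ^^ r) f) \<tau> + d_tau (\<lambda>y. acoef k j r * vp (real r - real j) y) \<tau> * (d_tau ^^ r) f \<tau>"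
        using dtau_mult[OF dA[of r] dF[of r]] by simp
      also have "d_tau (\<lambda>y. acoef k j r * vp (real r - real j) y) \<tau> = acoef k j r * d_tau (vp (real r - real j)) \<tau>"
        by (rule dtau_cmult[OF vp_diff[OF t]])
      finally show ?thesis unfolding dtau_vp[OF t] W1 WS X_def by (simp add: algebra_simps)
    qed
    have IH: "raise_pow k j f \<tau> = (\<Sum>r\<le>j. acoef k j r * W (Suc r) * X r)"
      using Suc.IH t by (simp add: WS X_def)
    have R: "raise_pow k (Suc j) f \<tau> = (\<Sum>r\<le>j. 2 * \<i> * acoef k j r * W (Suc r) * X (Suc r) + U r)"
    proof -
      have "raise_pow k (Suc j) f \<tau> = 2 * \<i> * d_tau (raise_pow k j f) \<tau> + complex_of_real ((k + 2 * real j) / Im \<tau>) * raise_pow k j f \<tau>"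
        by (simp add: raise_op_def)
      also have "\<dots> = 2 * \<i> * (\<Sum>r\<le>j. d_tau (T r) \<tau>) + (of_real (k + 2 * real j) * vp (-1) \<tau>) * (\<Sum>r\<le>j. acoef k j r * W (Suc r) * X r)"
        unfolding dR IH vp_inv[OF t] ..
      also have "\<dots> = (\<Sum>r\<le>j. 2 * \<i> * d_tau (T r) \<tau> + (of_real (k + 2 * real j) * vp (-1) \<tau>) * (acoef k j r * W (Suc r) * X r))"
        by (simp add: sum_distrib_left sum.distrib)
      also have "\<dots> = (\<Sum>r\<le>j. 2 * \<i> * acoef k j r * W (Suc r) * X (Suc r) + U r)"
      proof (rule sum.cong[OF refl])
        fix r
        have "(of_real (k + 2 * real j) * vp (-1) \<tau>) * (acoef k j r * W (Suc r) * X r) = of_real (k + 2 * real j) * acoef k j r * (vp (-1) \<tau> * W (Suc r)) * X r"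
          by (simp add: algebra_simps)
        also have "\<dots> = of_real (k + 2 * real j) * acoef k j r * W r * X r" unfolding Wm ..
        finally have a: "(of_real (k + 2 * real j) * vp (-1) \<tau>) * (acoef k j r * W (Suc r) * X r) = of_real (k + 2 * real j) * acoef k j r * W r * X r" .
        show "2 * \<i> * d_tau (T r) \<tau> + (of_real (k + 2 * real j) * vp (-1) \<tau>) * (acoef k j r * W (Suc r) * X r)
              = 2 * \<i> * acoef k j r * W (Suc r) * X (Suc r) + U r"
          unfolding a dTr U_def by (simp add: field_simps)
      qed
      finally show ?thesis .
    qed
    have S1: "(\<Sum>r\<le>Suc j. acoef k (Suc j) r * W r * X r) = acoef k (Suc j) 0 * W 0 * X 0 + (\<Sum>r\<le>j. acoef k (Suc j) (Suc r) * W (Suc r) * X (Suc r))"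
      by (simp only: sum.atMost_Suc_shift)
    have S2: "(\<Sum>r\<le>j. acoef k (Suc j) (Suc r) * W (Suc r) * X (Suc r)) = (\<Sum>r\<le>j. U (Suc r) + 2 * \<i> * acoef k j r * W (Suc r) * X (Suc r))"
    proof (rule sum.cong[OF refl])
      fix r assume "r \<in> {..j}"
      hence "r \<le> j" by simp
      show "acoef k (Suc j) (Suc r) * W (Suc r) * X (Suc r) = U (Suc r) + 2 * \<i> * acoef k j r * W (Suc r) * X (Suc r)"
        unfolding acoef_rec[OF \<open>r \<le> j\<close>] U_def by (simp add: algebra_simps)
    qed
    have S3: "(\<Sum>r\<le>j. U r) = U 0 + (\<Sum>r\<le>j. U (Suc r))"
    proof -
      have "U (Suc j) = 0" by (simp add: U_def acoef_top)
      hence "(\<Sum>r\<le>j. U r) = (\<Sum>r\<le>Suc j. U r)" by simp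
      also have "\<dots> = U 0 + (\<Sum>r\<le>j. U (Suc r))" by (simp only: sum.atMost_Suc_shift)
      finally show ?thesis .
    qed
    have U0: "U 0 = acoef k (Suc j) 0 * W 0 * X 0" by (simp add: U_def acoef_0)
    have "raise_pow k (Suc j) f \<tau> = (\<Sum>r\<le>Suc j. acoef k (Suc j) r * W r * X r)"
      unfolding R S1 S2 sum.distrib U0[symmetric] by (simp add: S3 sum.distrib algebra_simps)
    thus "raise_pow k (Suc j) f \<tau> = (\<Sum>r\<le>Suc j. acoef k (Suc j) r * vp (real r - real (Suc j)) \<tau> * (d_tau ^^ r) f \<tau>)"
      by (simp add: W_def X_def)
  qed
qed



lemma I1: "r \<le> j \<Longrightarrow> (a + real j - 1 gchoose (j - r)) = pochhammer (a + real r) (j - r) / fact (j - r)"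
  unfolding gbinomial_pochhammer' by (simp add: of_nat_diff algebra_simps)

lemma I2:
  assumes "r \<le> j"
  shows "(b + real j - 1 gchoose r) * pochhammer b (j - r) = fact (j - r) * (b + real j - 1 gchoose j) * real (j choose r)"
proof -
  have g1: "(b + real j - 1 gchoose r) = pochhammer (b + real (j - r)) r / fact r"
    unfolding gbinomial_pochhammer' using assms by (simp add: of_nat_diff algebra_simps)
  have g2: "(b + real j - 1 gchoose j) = pochhammer b j / fact j"
    unfolding gbinomial_pochhammer' by (simp add: algebra_simps)
  have p: "pochhammer b (j - r) * pochhammer (b + real (j - r)) r = pochhammer b j"
    using pochhammer_product'[of b "j - r" r] assms by simp
  have c: "real (j choose r) = fact j / (fact r * fact (j - r))" using binomial_fact[OF assms] by simp
  show ?thesis unfolding g1 g2 c using p[symmetric]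
    by (simp add: field_simps)
qed

lemma pow_aux: "(x::complex) ^ j * a ^ m * b ^ m / y ^ j = (x / y) ^ j * (a * b) ^ m"
  by (simp add: power_divide power_mult_distrib)

lemma pow_aux2: "(x::complex) ^ (r + m) * c ^ m = x ^ r * (x * c) ^ m"
  by (simp add: power_add power_mult_distrib)

lemma const_id:
  assumes "r \<le> j"
  shows "(- 4 * complex_of_real pi) ^ j * (-1) ^ (j - r) * (\<i>/2) ^ (j - r) / (2 * complex_of_real pi * \<i>) ^ j = (2 * \<i>) ^ r"
proof -
  define m where "m = j - r"
  have j: "j = r + m" using assms by (simp add: m_def)
  have pi: "complex_of_real pi \<noteq> 0" by simp
  have q: "(- 4 * complex_of_real pi) / (2 * complex_of_real pi * \<i>) = 2 * \<i>"
    using pi by (simp add: field_simps)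
  have "(- 4 * complex_of_real pi) ^ j * (-1) ^ m * (\<i>/2) ^ m / (2 * complex_of_real pi * \<i>) ^ j
      = ((- 4 * complex_of_real pi) / (2 * complex_of_real pi * \<i>)) ^ j * ((-1) * (\<i>/2)) ^ m"
    by (rule pow_aux)
  also have "\<dots> = (2 * \<i>) ^ r * ((2 * \<i>) * ((-1) * (\<i>/2))) ^ m"
    unfolding q j by (rule pow_aux2)
  also have "(2 * \<i>) * ((-1) * (\<i>/2)) = 1" by simp
  finally show ?thesis by (simp add: m_def)
qed

lemma coef_lemma:
  assumes "r \<le> j"
  shows "(- 4 * complex_of_real pi) ^ j * (-1) ^ (j - r) * of_real (a + real j - 1 gchoose (j - r))
          * of_real (b + real j - 1 gchoose r) * (\<i>/2) ^ (j - r) * of_real (pochhammer b (j - r))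
          / (2 * complex_of_real pi * \<i>) ^ j
        = of_real (b + real j - 1 gchoose j) * acoef a j r"
proof -
  have R: "(a + real j - 1 gchoose (j - r)) * ((b + real j - 1 gchoose r) * pochhammer b (j - r))
        = (b + real j - 1 gchoose j) * acR a j r"
    unfolding I1[OF assms] I2[OF assms] acR_def by (simp add: field_simps)
  have "(- 4 * complex_of_real pi) ^ j * (-1) ^ (j - r) * of_real (a + real j - 1 gchoose (j - r))
          * of_real (b + real j - 1 gchoose r) * (\<i>/2) ^ (j - r) * of_real (pochhammer b (j - r))
          / (2 * complex_of_real pi * \<i>) ^ j
      = ((- 4 * complex_of_real pi) ^ j * (-1) ^ (j - r) * (\<i>/2) ^ (j - r) / (2 * complex_of_real pi * \<i>) ^ j)
        * of_real ((a + real j - 1 gchoose (j - r)) * ((b + real j - 1 gchoose r) * pochhammer b (j - r)))"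
    by (simp add: field_simps)
  also have "\<dots> = (2 * \<i>) ^ r * of_real ((b + real j - 1 gchoose j) * acR a j r)"
    unfolding const_id[OF assms] R ..
  finally show ?thesis by (simp add: acoef_def)
qed



lemma nd_eq: "nderiv n F = (\<lambda>x. (1 / (2 * complex_of_real pi * \<i>) ^ n) * (d_tau ^^ n) F x)"
  by (auto simp: nderiv_def fun_eq_iff)

lemma nd_diff: "smooth_on uhp F \<Longrightarrow> \<tau> \<in> uhp \<Longrightarrow> nderiv n F differentiable at \<tau>"
  unfolding nd_eq using sm_diff[OF sm_funpow] by (simp add: differentiable_mult)

lemma dbar_nd:
  assumes sm: "smooth_on uhp F" and lap: "\<forall>\<tau>\<in>uhp. laplace w F \<tau> = 0" and t: "\<tau> \<in> uhp"
  shows "d_taubar (nderiv n F) \<tau> = (\<i>/2)^n * of_real (pochhammer w n) * vp (- real n) \<tau> * d_taubar F \<tau> / (2 * complex_of_real pi * \<i>) ^ n"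
proof -
  have "d_taubar (nderiv n F) \<tau> = (1 / (2 * complex_of_real pi * \<i>) ^ n) * d_taubar ((d_tau ^^ n) F) \<tau>"
    unfolding nd_eq by (rule dtaubar_cmult[OF sm_diff[OF sm_funpow[OF sm] t]])
  also have "\<dots> = (\<i>/2)^n * of_real (pochhammer w n) * vp (- real n) \<tau> * d_taubar F \<tau> / (2 * complex_of_real pi * \<i>) ^ n"
    using dtaubar_pow[OF sm lap] t by simp
  finally show ?thesis .
qed

lemma hmf_smooth: "harmonic_maass_form k G f \<Longrightarrow> smooth_on uhp f"
  by (simp add: harmonic_maass_form_def)

lemma hmf_lap: "harmonic_maass_form k G f \<Longrightarrow> \<forall>\<tau>\<in>uhp. laplace k f \<tau> = 0"
  by (simp add: harmonic_maass_form_def)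

lemma sign_id: "s \<le> j \<Longrightarrow> (-1::complex) ^ s = (-1) ^ j * (-1) ^ (j - s)"
proof -
  assume "s \<le> j"
  hence "(-1::complex) ^ j = (-1) ^ s * (-1) ^ (j - s)" by (simp add: power_add[symmetric])
  moreover have "(-1::complex) ^ (j - s) * (-1) ^ (j - s) = 1" by (simp add: power_mult_distrib[symmetric])
  ultimately show ?thesis by (metis mult.assoc mult.right_neutral)
qed

theorem main_at:
  fixes k l :: real and f g :: "complex \<Rightarrow> complex" and j :: nat
  assumes smf: "smooth_on uhp f" and lapf: "\<forall>\<tau>\<in>uhp. laplace k f \<tau> = 0"
    and smg: "smooth_on uhp g" and lapg: "\<forall>\<tau>\<in>uhp. laplace l g \<tau> = 0"
    and t: "\<tau> \<in> uhp"
  shows "(- 4 * complex_of_real pi) ^ j * lower_op (rc_bracket k l j f g) \<tau> =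
      complex_of_real ((l + real j - 1) gchoose j) * raise_pow k j f \<tau> * lower_op g \<tau>
    + (-1) ^ j * complex_of_real ((k + real j - 1) gchoose j) * lower_op f \<tau> * raise_pow l j g \<tau>"
proof -
  define z where "z = 2 * complex_of_real pi * \<i>"
  have z: "z \<noteq> 0" by (simp add: z_def)
  have ndz: "nderiv n F x = (d_tau ^^ n) F x / z ^ n" for n F x by (simp add: nderiv_def z_def)
  define M where "M = - 4 * complex_of_real pi"
  define c where "c s = (-1) ^ s * complex_of_real ((k + real j - 1) gchoose s) * complex_of_real ((l + real j - 1) gchoose (j - s))" for s
  define V where "V = - 2 * \<i> * complex_of_real ((Im \<tau>)\<^sup>2)"
  define Lf where "Lf = lower_op f \<tau>"
  define Lg where "Lg = lower_op g \<tau>"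
  have Lf: "Lf = V * d_taubar f \<tau>" by (simp add: Lf_def V_def lower_op_def)
  have Lg: "Lg = V * d_taubar g \<tau>" by (simp add: Lg_def V_def lower_op_def)
  define termA where "termA s = M ^ j * c s * ((d_tau ^^ (j - s)) f \<tau> / z ^ (j - s))
      * ((\<i>/2)^s * of_real (pochhammer l s) * vp (- real s) \<tau> / z ^ s) * Lg" for s
  define termB where "termB s = M ^ j * c s * ((\<i>/2)^(j - s) * of_real (pochhammer k (j - s)) * vp (- real (j - s)) \<tau> / z ^ (j - s))
      * Lf * ((d_tau ^^ s) g \<tau> / z ^ s)" for s
  have rc: "rc_bracket k l j f g = (\<lambda>x. \<Sum>s\<in>{0..j}. (\<lambda>y. c s * nderiv (j - s) f y) x * nderiv s g x)"
    unfolding rc_bracket_def c_def by simp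
  have dA: "(\<lambda>y. c s * nderiv (j - s) f y) differentiable at \<tau>" for s
    using nd_diff[OF smf t] by (simp add: differentiable_mult)
  have dbar_rc: "d_taubar (rc_bracket k l j f g) \<tau> = (\<Sum>s\<in>{0..j}.
       c s * nderiv (j - s) f \<tau> * d_taubar (nderiv s g) \<tau> + c s * d_taubar (nderiv (j - s) f) \<tau> * nderiv s g \<tau>)"
  proof -
    have "d_taubar (rc_bracket k l j f g) \<tau> = (\<Sum>s\<in>{0..j}. d_taubar (\<lambda>x. (\<lambda>y. c s * nderiv (j - s) f y) x * nderiv s g x) \<tau>)"
      unfolding rc by (rule dtaubar_sum) (auto intro!: differentiable_mult dA nd_diff[OF smg t])
    also have "\<dots> = (\<Sum>s\<in>{0..j}.
       c s * nderiv (j - s) f \<tau> * d_taubar (nderiv s g) \<tau> + c s * d_taubar (nderiv (j - s) f) \<tau> * nderiv s g \<tau>)"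
    proof (rule sum.cong[OF refl])
      fix s
      show "d_taubar (\<lambda>x. (\<lambda>y. c s * nderiv (j - s) f y) x * nderiv s g x) \<tau> =
            c s * nderiv (j - s) f \<tau> * d_taubar (nderiv s g) \<tau> + c s * d_taubar (nderiv (j - s) f) \<tau> * nderiv s g \<tau>"
        using dtaubar_mult[OF dA[of s] nd_diff[OF smg t, of s]] dtaubar_cmult[OF nd_diff[OF smf t, of "j - s"], of "c s"]
        by (simp add: mult.assoc)
    qed
    finally show ?thesis .
  qed
  have LHS: "M ^ j * lower_op (rc_bracket k l j f g) \<tau> = (\<Sum>s\<in>{0..j}. termA s + termB s)"
  proof -
    have "M ^ j * lower_op (rc_bracket k l j f g) \<tau> = M ^ j * V * d_taubar (rc_bracket k l j f g) \<tau>"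
      by (simp add: lower_op_def V_def)
    also have "\<dots> = (\<Sum>s\<in>{0..j}. M ^ j * V * (c s * nderiv (j - s) f \<tau> * d_taubar (nderiv s g) \<tau> + c s * d_taubar (nderiv (j - s) f) \<tau> * nderiv s g \<tau>))"
      unfolding dbar_rc by (simp add: sum_distrib_left)
    also have "\<dots> = (\<Sum>s\<in>{0..j}. termA s + termB s)"
    proof (rule sum.cong[OF refl])
      fix s
      show "M ^ j * V * (c s * nderiv (j - s) f \<tau> * d_taubar (nderiv s g) \<tau> + c s * d_taubar (nderiv (j - s) f) \<tau> * nderiv s g \<tau>) = termA s + termB s"
        unfolding termA_def termB_def dbar_nd[OF smg lapg t] dbar_nd[OF smf lapf t] Lf Lg z_def[symmetric] ndz
        using z by (simp add: field_simps)
    qed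
    finally show ?thesis .
  qed
  have SA: "(\<Sum>s\<in>{0..j}. termA s) = complex_of_real ((l + real j - 1) gchoose j) * raise_pow k j f \<tau> * Lg"
  proof -
    have "(\<Sum>s\<in>{0..j}. termA s) = (\<Sum>r\<in>{0..j}. termA (j - r))"
      by (subst sum.atLeastAtMost_rev) simp
    also have "\<dots> = (\<Sum>r\<in>{0..j}. complex_of_real ((l + real j - 1) gchoose j) * (acoef k j r * vp (real r - real j) \<tau> * (d_tau ^^ r) f \<tau>) * Lg)"
    proof (rule sum.cong[OF refl])
      fix r assume "r \<in> {0..j}"
      hence r: "r \<le> j" by simp
      have jr: "j - (j - r) = r" using r by simp
      have vpe: "vp (- real (j - r)) \<tau> = vp (real r - real j) \<tau>"
        by (rule arg_cong[where f="\<lambda>a. vp a \<tau>"]) (simp add: of_nat_diff r)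
      have zz: "z ^ j = z ^ r * z ^ (j - r)" using r by (simp add: power_add[symmetric])
      have co: "M ^ j * (-1) ^ (j - r) * of_real (k + real j - 1 gchoose (j - r))
          * of_real (l + real j - 1 gchoose r) * (\<i>/2) ^ (j - r) * of_real (pochhammer l (j - r))
          / z ^ j = of_real (l + real j - 1 gchoose j) * acoef k j r"
        unfolding M_def z_def by (rule coef_lemma[OF r])
      have "termA (j - r) = (M ^ j * (-1) ^ (j - r) * of_real (k + real j - 1 gchoose (j - r))
          * of_real (l + real j - 1 gchoose r) * (\<i>/2) ^ (j - r) * of_real (pochhammer l (j - r))
          / z ^ j) * (vp (real r - real j) \<tau> * (d_tau ^^ r) f \<tau> * Lg)"
        unfolding termA_def c_def jr vpe using z by (simp add: field_simps zz)
      also have "\<dots> = (of_real (l + real j - 1 gchoose j) * acoef k j r) * (vp (real r - real j) \<tau> * (d_tau ^^ r) f \<tau> * Lg)"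
        unfolding co ..
      finally show "termA (j - r) = complex_of_real ((l + real j - 1) gchoose j) * (acoef k j r * vp (real r - real j) \<tau> * (d_tau ^^ r) f \<tau>) * Lg"
        by (simp add: mult_ac)
    qed
    also have "\<dots> = complex_of_real ((l + real j - 1) gchoose j) * (\<Sum>r\<le>j. acoef k j r * vp (real r - real j) \<tau> * (d_tau ^^ r) f \<tau>) * Lg"
      by (simp add: sum_distrib_left sum_distrib_right atLeast0AtMost)
    also have "\<dots> = complex_of_real ((l + real j - 1) gchoose j) * raise_pow k j f \<tau> * Lg"
      using raise_expand[OF smf] t by simp
    finally show ?thesis .
  qed
  have SB: "(\<Sum>s\<in>{0..j}. termB s) = (-1) ^ j * complex_of_real ((k + real j - 1) gchoose j) * Lf * raise_pow l j g \<tau>"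
  proof -
    have "(\<Sum>s\<in>{0..j}. termB s) = (\<Sum>s\<in>{0..j}. (-1) ^ j * complex_of_real ((k + real j - 1) gchoose j) * Lf * (acoef l j s * vp (real s - real j) \<tau> * (d_tau ^^ s) g \<tau>))"
    proof (rule sum.cong[OF refl])
      fix s assume "s \<in> {0..j}"
      hence s: "s \<le> j" by simp
      have vpe: "vp (- real (j - s)) \<tau> = vp (real s - real j) \<tau>"
        by (rule arg_cong[where f="\<lambda>a. vp a \<tau>"]) (simp add: of_nat_diff s)
      have zz: "z ^ j = z ^ s * z ^ (j - s)" using s by (simp add: power_add[symmetric])
      have co: "M ^ j * (-1) ^ (j - s) * of_real (l + real j - 1 gchoose (j - s))
          * of_real (k + real j - 1 gchoose s) * (\<i>/2) ^ (j - s) * of_real (pochhammer k (j - s))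
          / z ^ j = of_real (k + real j - 1 gchoose j) * acoef l j s"
        unfolding M_def z_def by (rule coef_lemma[OF s])
      have "termB s = (-1) ^ j * (M ^ j * (-1) ^ (j - s) * of_real (l + real j - 1 gchoose (j - s))
          * of_real (k + real j - 1 gchoose s) * (\<i>/2) ^ (j - s) * of_real (pochhammer k (j - s))
          / z ^ j) * (Lf * vp (real s - real j) \<tau> * (d_tau ^^ s) g \<tau>)"
        unfolding termB_def c_def vpe sign_id[OF s] using z by (simp add: field_simps zz)
      also have "\<dots> = (-1) ^ j * (of_real (k + real j - 1 gchoose j) * acoef l j s) * (Lf * vp (real s - real j) \<tau> * (d_tau ^^ s) g \<tau>)"
        unfolding co ..
      finally show "termB s = (-1) ^ j * complex_of_real ((k + real j - 1) gchoose j) * Lf * (acoef l j s * vp (real s - real j) \<tau> * (d_tau ^^ s) g \<tau>)"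
        by (simp add: mult_ac)
    qed
    also have "\<dots> = (-1) ^ j * complex_of_real ((k + real j - 1) gchoose j) * Lf * (\<Sum>s\<le>j. acoef l j s * vp (real s - real j) \<tau> * (d_tau ^^ s) g \<tau>)"
      by (simp add: sum_distrib_left atLeast0AtMost)
    also have "\<dots> = (-1) ^ j * complex_of_real ((k + real j - 1) gchoose j) * Lf * raise_pow l j g \<tau>"
      using raise_expand[OF smg] t by simp
    finally show ?thesis .
  qed
  show ?thesis
    using LHS SA SB unfolding M_def Lf_def Lg_def by (simp add: sum.distrib)
qed



theorem proposition3p6:
  fixes G :: "mp set" and k l :: real and f g :: "complex \<Rightarrow> complex" and j :: nat
  assumes "congruence_subgroup_Mp2 G"
    and "harmonic_maass_form k G f"
    and "harmonic_maass_form l G g"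
  shows "\<forall>\<tau>\<in>uhp.
    (- 4 * complex_of_real pi) ^ j * lower_op (rc_bracket k l j f g) \<tau> =
      complex_of_real ((l + real j - 1) gchoose j) * raise_pow k j f \<tau> * lower_op g \<tau>
    + (-1) ^ j * complex_of_real ((k + real j - 1) gchoose j) * lower_op f \<tau> * raise_pow l j g \<tau>"
  using main_at[OF hmf_smooth[OF assms(2)] hmf_lap[OF assms(2)] hmf_smooth[OF assms(3)] hmf_lap[OF assms(3)]]
  by blast

end
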